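(* Let $\mathfrak K=(K,\bigsqcup,\odot,{}^*,{\sim},e)$ be a semi-Foulis dynamic algebra and $u\in\widetilde K$. Then the map $u\bullet(-)\colon\widetilde K\to\widetilde K$ equals the Sasaki projection $\pi_u$ of the orthomodular lattice $(\widetilde K,\preceq,{}^\perp)$, i.e. $u\bullet v=u\wedge(u^\perp\vee v)$ for all $v\in\widetilde K$.
   Context: An involutive unital quantale is $(Q,\bigsqcup,\odot,{}^*,e)$: $Q$ a complete join-semilattice, $\odot$ associative and distributing over arbitrary joins in each argument, $e$ a unit, ${}^*$ with $x^{**}=x$, $(x\odot y)^*=y^*\odot x^*$, $(\bigsqcup_i x_i)^*=\bigsqcup_i x_i^*$. An involutive generalized dynamic algebra is $\mathfrak K=(K,\bigsqcup,\odot,{}^*,{\sim},e)$ with $(K,\bigsqcup,\odot,{}^*,e)$ an involutive unital quantale and ${\sim}\colon K\to K$ such that for all $x,y\in K$ and families $(x_i)$: ${\sim}(x\odot{\sim}{\sim}y)={\sim}(x\odot y)$; ${\sim}(\bigsqcup_i{\sim}{\sim}x_i)={\sim}(\bigsqcup_i x_i)$; $({\sim}x)^*={\sim}x$; ${\sim}{\sim}({\sim}{\sim}x\odot y)={\sim}({\sim}x\sqcup{\sim}({\sim}x\sqcup y))$. Test set $\widetilde K=\{{\sim}k\mid k\in K\}$; for $W\subseteq\widetilde K$, $\bigvee W={\sim}{\sim}(\bigsqcup W)$; $w^\perp={\sim}w$; $k\preceq l$ iff $\bigvee\{k,l\}=l$; action $k\bullet v={\sim}{\sim}(k\odot v)$.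 It is a semi-Foulis dynamic algebra if $(\widetilde K,\preceq,{}^\perp)$ is a complete orthomodular lattice. In an orthomodular lattice the Sasaki projection onto $u$ is $\pi_u(x)=u\wedge(u^\perp\vee x)$. *)

theory Defs
  imports Main
begin

text \<open>The complete join-semilattice K is modelled by a type of class complete_lattice
  (every complete join-semilattice is a complete lattice); arbitrary joins are Sup.
  Multiplication m, involution s, the operation t (tilde) and unit e are parameters.\<close>

definition inv_unital_quantale ::
  "('a::complete_lattice \<Rightarrow> 'a \<Rightarrow> 'a) \<Rightarrow> ('a \<Rightarrow> 'a) \<Rightarrow> 'a \<Rightarrow> bool" where
  "inv_unital_quantale m s e \<longleftrightarrow>
     (\<forall>x y z. m (m x y) z = m x (m y z)) \<and>
     (\<forall>x A. m x (Sup A) = Sup ((\<lambda>a. m x a) ` A)) \<and>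
     (\<forall>x A. m (Sup A) x = Sup ((\<lambda>a. m a x) ` A)) \<and>
     (\<forall>x. m e x = x \<and> m x e = x) \<and>
     (\<forall>x. s (s x) = x) \<and>
     (\<forall>x y. s (m x y) = m (s y) (s x)) \<and>
     (\<forall>A. s (Sup A) = Sup (s ` A))"

definition inv_gen_dynamic_algebra ::
  "('a::complete_lattice \<Rightarrow> 'a \<Rightarrow> 'a) \<Rightarrow> ('a \<Rightarrow> 'a) \<Rightarrow> ('a \<Rightarrow> 'a) \<Rightarrow> 'a \<Rightarrow> bool" where
  "inv_gen_dynamic_algebra m s t e \<longleftrightarrow>
     inv_unital_quantale m s e \<and>
     (\<forall>x y. t (m x (t (t y))) = t (m x y)) \<and>
     (\<forall>(I::'a set) (f::'a \<Rightarrow> 'a). t (Sup ((\<lambda>i. t (t (f i))) ` I)) = t (Sup (f ` I))) \<and>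
     (\<forall>x. s (t x) = t x) \<and>
     (\<forall>x y. t (t (m (t (t x)) y)) = t (sup (t x) (t (sup (t x) y))))"

definition tests :: "('a \<Rightarrow> 'a) \<Rightarrow> 'a set" where
  "tests t = range t"

definition tvee :: "('a::complete_lattice \<Rightarrow> 'a) \<Rightarrow> 'a set \<Rightarrow> 'a" where
  "tvee t W = t (t (Sup W))"

definition tle :: "('a::complete_lattice \<Rightarrow> 'a) \<Rightarrow> 'a \<Rightarrow> 'a \<Rightarrow> bool" where
  "tle t k l \<longleftrightarrow> tvee t {k, l} = l"

definition act :: "('a \<Rightarrow> 'a \<Rightarrow> 'a) \<Rightarrow> ('a \<Rightarrow> 'a) \<Rightarrow> 'a \<Rightarrow> 'a \<Rightarrow> 'a" where
  "act m t k v = t (t (m k v))"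

definition is_lub_on :: "'b set \<Rightarrow> ('b \<Rightarrow> 'b \<Rightarrow> bool) \<Rightarrow> 'b set \<Rightarrow> 'b \<Rightarrow> bool" where
  "is_lub_on T le A x \<longleftrightarrow> x \<in> T \<and> (\<forall>a\<in>A. le a x) \<and> (\<forall>y\<in>T. (\<forall>a\<in>A. le a y) \<longrightarrow> le x y)"

definition is_glb_on :: "'b set \<Rightarrow> ('b \<Rightarrow> 'b \<Rightarrow> bool) \<Rightarrow> 'b set \<Rightarrow> 'b \<Rightarrow> bool" where
  "is_glb_on T le A x \<longleftrightarrow> x \<in> T \<and> (\<forall>a\<in>A. le x a) \<and> (\<forall>y\<in>T. (\<forall>a\<in>A. le y a) \<longrightarrow> le y x)"

definition ljoin :: "'b set \<Rightarrow> ('b \<Rightarrow> 'b \<Rightarrow> bool) \<Rightarrow> 'b \<Rightarrow> 'b \<Rightarrow> 'b" where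
  "ljoin T le x y = (THE z. is_lub_on T le {x, y} z)"

definition lmeet :: "'b set \<Rightarrow> ('b \<Rightarrow> 'b \<Rightarrow> bool) \<Rightarrow> 'b \<Rightarrow> 'b \<Rightarrow> 'b" where
  "lmeet T le x y = (THE z. is_glb_on T le {x, y} z)"

definition complete_orthomodular_lattice ::
  "'b set \<Rightarrow> ('b \<Rightarrow> 'b \<Rightarrow> bool) \<Rightarrow> ('b \<Rightarrow> 'b) \<Rightarrow> bool" where
  "complete_orthomodular_lattice T le c \<longleftrightarrow>
     \<comment> \<open>partial order\<close>
     (\<forall>x\<in>T. le x x) \<and>
     (\<forall>x\<in>T. \<forall>y\<in>T. le x y \<and> le y x \<longrightarrow> x = y) \<and>
     (\<forall>x\<in>T. \<forall>y\<in>T. \<forall>z\<in>T. le x y \<and> le y z \<longrightarrow> le x z) \<and>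
     \<comment> \<open>complete lattice\<close>
     (\<forall>A. A \<subseteq> T \<longrightarrow> (\<exists>x. is_lub_on T le A x)) \<and>
     (\<forall>A. A \<subseteq> T \<longrightarrow> (\<exists>x. is_glb_on T le A x)) \<and>
     \<comment> \<open>orthocomplementation\<close>
     (\<forall>x\<in>T. c x \<in> T) \<and>
     (\<forall>x\<in>T. c (c x) = x) \<and>
     (\<forall>x\<in>T. \<forall>y\<in>T. le x y \<longrightarrow> le (c y) (c x)) \<and>
     (\<forall>x\<in>T. is_lub_on T le {x, c x} (THE z. is_lub_on T le T z)) \<and>
     (\<forall>x\<in>T. is_glb_on T le {x, c x} (THE z. is_glb_on T le T z)) \<and>
     \<comment> \<open>orthomodular law\<close>
     (\<forall>x\<in>T. \<forall>y\<in>T. le x y \<longrightarrow> y = ljoin T le x (lmeet T le (c x) y))"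

definition semi_foulis_dynamic_algebra ::
  "('a::complete_lattice \<Rightarrow> 'a \<Rightarrow> 'a) \<Rightarrow> ('a \<Rightarrow> 'a) \<Rightarrow> ('a \<Rightarrow> 'a) \<Rightarrow> 'a \<Rightarrow> bool" where
  "semi_foulis_dynamic_algebra m s t e \<longleftrightarrow>
     inv_gen_dynamic_algebra m s t e \<and>
     complete_orthomodular_lattice (tests t) (tle t) t"

definition sasaki :: "'b set \<Rightarrow> ('b \<Rightarrow> 'b \<Rightarrow> bool) \<Rightarrow> ('b \<Rightarrow> 'b) \<Rightarrow> 'b \<Rightarrow> 'b \<Rightarrow> 'b" where
  "sasaki T le c u x = lmeet T le u (ljoin T le (c u) x)"

end

theory Submission
  imports Defs
begin

theorem lemma3p6:
  fixes m :: "'a::complete_lattice \<Rightarrow> 'a \<Rightarrow> 'a" and s t :: "'a \<Rightarrow> 'a" and e u v :: 'a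
  assumes "semi_foulis_dynamic_algebra m s t e"
    and "u \<in> tests t" and "v \<in> tests t"
  shows "act m t u v = sasaki (tests t) (tle t) t u v"
proof -
  define T where "T = tests t"
  have Q: "inv_unital_quantale m s e" and A1: "\<And>x y. t (m x (t (t y))) = t (m x y)"
    and A2: "\<And>(I::'a set) (f::'a \<Rightarrow> 'a). t (Sup ((\<lambda>i. t (t (f i))) ` I)) = t (Sup (f ` I))"
    and A4: "\<And>x y. t (t (m (t (t x)) y)) = t (sup (t x) (t (sup (t x) y)))"
    and OML: "complete_orthomodular_lattice T (tle t) t"
    using assms(1) unfolding semi_foulis_dynamic_algebra_def inv_gen_dynamic_algebra_def T_def
    by blast+
  have unit: "\<And>x. m e x = x" using Q unfolding inv_unital_quantale_def by blast
  have ttt: "\<And>y. t (t (t y)) = t y" using A1[of e] unit by simp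
  have ts: "\<And>x y. t (sup (t (t x)) (t (t y))) = t (sup x y)"
  proof -
    fix x y
    show "t (sup (t (t x)) (t (t y))) = t (sup x y)"
      using A2[of id "{x,y}"] by simp
  qed
  have tT: "\<And>w. w \<in> T \<Longrightarrow> t (t w) = w" unfolding T_def tests_def using ttt by auto
  have inT: "\<And>x. t x \<in> T" unfolding T_def tests_def by auto
  have tleI: "\<And>a b. tle t a b \<longleftrightarrow> t (t (sup a b)) = b" unfolding tle_def tvee_def by simp
  have OML2: "(\<forall>x\<in>T. \<forall>y\<in>T. tle t x y \<and> tle t y x \<longrightarrow> x = y)"
    using OML unfolding complete_orthomodular_lattice_def by (elim conjE) assumption
  have OML8: "(\<forall>x\<in>T. \<forall>y\<in>T. tle t x y \<longrightarrow> tle t (t y) (t x))"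
    using OML unfolding complete_orthomodular_lattice_def by (elim conjE) assumption
  have antis: "\<And>x y. x \<in> T \<Longrightarrow> y \<in> T \<Longrightarrow> tle t x y \<Longrightarrow> tle t y x \<Longrightarrow> x = y"
    using OML2 by blast
  have anti: "\<And>x y. x \<in> T \<Longrightarrow> y \<in> T \<Longrightarrow> tle t x y \<Longrightarrow> tle t (t y) (t x)"
    using OML8 by blast
  have lub: "\<And>a b. a \<in> T \<Longrightarrow> b \<in> T \<Longrightarrow> is_lub_on T (tle t) {a,b} (t (t (sup a b)))"
  proof -
    fix a b assume a: "a \<in> T" and b: "b \<in> T"
    have ub1: "tle t a (t (t (sup a b)))"
      unfolding tleI using ts[of a "sup a b"] tT[OF a] by (simp add: sup_assoc[symmetric])
    have ub2: "tle t b (t (t (sup a b)))"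
      unfolding tleI using ts[of b "sup a b"] tT[OF b] by (simp add: sup_commute sup_left_commute)
    have least: "tle t (t (t (sup a b))) c" if c: "c \<in> T" and h1: "tle t a c" and h2: "tle t b c" for c
    proof -
      have e1: "t (sup a c) = t c" using h1 unfolding tleI by (metis ttt)
      have e2: "t (sup b c) = t c" using h2 unfolding tleI by (metis ttt)
      have "t (sup (t (t (sup a b))) c) = t (sup (t (t (sup a b))) (t (t c)))" using tT[OF c] by simp
      also have "\<dots> = t (sup a (sup b c))" using ts by (simp add: sup_assoc)
      also have "\<dots> = t (sup (t (t a)) (t (t (sup b c))))" using ts by simp
      also have "\<dots> = t (sup a (t (t c)))" using e2 tT[OF a] by simp
      also have "\<dots> = t c" using tT[OF c] e1 by simp
      finally show ?thesis unfolding tleI using tT[OF c] by simp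
    qed
    show "is_lub_on T (tle t) {a,b} (t (t (sup a b)))"
      unfolding is_lub_on_def using ub1 ub2 least inT by auto
  qed
  have ljoin: "\<And>a b. a \<in> T \<Longrightarrow> b \<in> T \<Longrightarrow> ljoin T (tle t) a b = t (t (sup a b))"
  proof -
    fix a b assume a: "a \<in> T" and b: "b \<in> T"
    show "ljoin T (tle t) a b = t (t (sup a b))"
      unfolding ljoin_def
    proof (rule the_equality)
      show "is_lub_on T (tle t) {a, b} (t (t (sup a b)))" using lub a b .
      fix z assume z: "is_lub_on T (tle t) {a, b} z"
      show "z = t (t (sup a b))"
        using z lub[OF a b] antis unfolding is_lub_on_def by blast
    qed
  qed
  have glb: "\<And>a b. a \<in> T \<Longrightarrow> b \<in> T \<Longrightarrow> is_glb_on T (tle t) {a,b} (t (sup (t a) (t b)))"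
  proof -
    fix a b assume a: "a \<in> T" and b: "b \<in> T"
    have L: "is_lub_on T (tle t) {t a, t b} (t (t (sup (t a) (t b))))" using lub inT by blast
    have lb1: "tle t (t (sup (t a) (t b))) a"
      using anti[of "t a" "t (t (sup (t a) (t b)))"] L inT tT[OF a] ttt unfolding is_lub_on_def by auto
    have lb2: "tle t (t (sup (t a) (t b))) b"
      using anti[of "t b" "t (t (sup (t a) (t b)))"] L inT tT[OF b] ttt unfolding is_lub_on_def by auto
    have gr: "tle t y (t (sup (t a) (t b)))" if y: "y \<in> T" and h1: "tle t y a" and h2: "tle t y b" for y
    proof -
      have "tle t (t a) (t y)" using anti h1 a y by blast
      moreover have "tle t (t b) (t y)" using anti h2 b y by blast
      ultimately have "tle t (t (t (sup (t a) (t b)))) (t y)" using L inT unfolding is_lub_on_def by blast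
      then have "tle t (t (t y)) (t (t (t (sup (t a) (t b)))))" using anti[OF inT inT] by blast
      then show ?thesis using tT[OF y] ttt by simp
    qed
    show "is_glb_on T (tle t) {a,b} (t (sup (t a) (t b)))"
      unfolding is_glb_on_def using lb1 lb2 gr inT by auto
  qed
  have lmeet: "\<And>a b. a \<in> T \<Longrightarrow> b \<in> T \<Longrightarrow> lmeet T (tle t) a b = t (sup (t a) (t b))"
  proof -
    fix a b assume a: "a \<in> T" and b: "b \<in> T"
    show "lmeet T (tle t) a b = t (sup (t a) (t b))"
      unfolding lmeet_def
    proof (rule the_equality)
      show "is_glb_on T (tle t) {a, b} (t (sup (t a) (t b)))" using glb a b .
      fix z assume z: "is_glb_on T (tle t) {a, b} z"
      show "z = t (sup (t a) (t b))"
        using z glb[OF a b] antis unfolding is_glb_on_def by blast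
    qed
  qed
  have u: "u \<in> T" and v: "v \<in> T" using assms T_def by auto
  have "sasaki T (tle t) t u v = t (sup (t u) (t (t (t (sup (t u) v)))))"
    unfolding sasaki_def using ljoin[OF inT v] lmeet[OF u inT] by simp
  also have "\<dots> = t (sup (t u) (t (sup (t u) v)))" using ttt by simp
  also have "\<dots> = act m t u v" unfolding act_def using A4[of u v] tT[OF u] by simp
  finally show ?thesis using T_def by simp
qed

end
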